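(* Let $G=(V,E,\ell,\Phi)$ be a weak model that is strongly connected and trackable. Then $n_G(t)=O(1)$, i.e. there is a constant $C$ such that $n_G(t)\le C$ for all $t\ge 1$.
   Context: A (single-colored) weak model $G=(V,E,\ell,\Phi)$ consists of a finite set of nodes $V$, a set of directed edges $E\subseteq V\times V$, a finite set of colors $\Phi$, and a coloring $\ell:V\to\Phi$. A walk of length $t$ is a sequence $(x_1,\dots,x_t)$ of nodes with $(x_i,x_{i+1})\in E$ for all $1\le i<t$. For a color sequence $Y_{[t]}=(Y_1,\dots,Y_t)\in\Phi^t$, a hypothesis is a walk $(x_1,\dots,x_t)$ with $\ell(x_i)=Y_i$ for all $i$; $\mathcal H_G(Y_{[t]})$ denotes the set of hypotheses. Define $n_G(t)=\max_{Y_{[t]}\in\Phi^t}|\mathcal H_G(Y_{[t]})|$. The model is trackable if $n_G(t)=O(t^k)$ for some $k\ge 0$. It is strongly connected if for every ordered pair of nodes $u,w$ there is a directed path from $u$ to $w$. *)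

theory Defs
  imports Main "HOL-Library.Landau_Symbols"
begin

definition weak_model :: "'v set \<Rightarrow> ('v \<times> 'v) set \<Rightarrow> ('v \<Rightarrow> 'c) \<Rightarrow> 'c set \<Rightarrow> bool" where
  "weak_model V E ell Phi \<longleftrightarrow> finite V \<and> E \<subseteq> V \<times> V \<and> finite Phi \<and> ell ` V \<subseteq> Phi"

definition is_walk :: "'v set \<Rightarrow> ('v \<times> 'v) set \<Rightarrow> 'v list \<Rightarrow> bool" where
  "is_walk V E xs \<longleftrightarrow> set xs \<subseteq> V \<and> (\<forall>i. Suc i < length xs \<longrightarrow> (xs ! i, xs ! Suc i) \<in> E)"

definition hypotheses :: "'v set \<Rightarrow> ('v \<times> 'v) set \<Rightarrow> ('v \<Rightarrow> 'c) \<Rightarrow> 'c list \<Rightarrow> 'v list set" where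
  "hypotheses V E ell Y = {xs. is_walk V E xs \<and> length xs = length Y \<and> map ell xs = Y}"

text \<open>n_G(t) = max over Y in Phi^t of |H_G(Y)| (the insert 0 only guards the degenerate empty case).\<close>
definition n_G :: "'v set \<Rightarrow> ('v \<times> 'v) set \<Rightarrow> ('v \<Rightarrow> 'c) \<Rightarrow> 'c set \<Rightarrow> nat \<Rightarrow> nat" where
  "n_G V E ell Phi t = Max (insert 0 ((\<lambda>Y. card (hypotheses V E ell Y)) ` {Y. set Y \<subseteq> Phi \<and> length Y = t}))"

definition trackable :: "'v set \<Rightarrow> ('v \<times> 'v) set \<Rightarrow> ('v \<Rightarrow> 'c) \<Rightarrow> 'c set \<Rightarrow> bool" where
  "trackable V E ell Phi \<longleftrightarrow> (\<exists>k::nat. (\<lambda>t. real (n_G V E ell Phi t)) \<in> O(\<lambda>t. real t ^ k))"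

definition strongly_connected :: "'v set \<Rightarrow> ('v \<times> 'v) set \<Rightarrow> bool" where
  "strongly_connected V E \<longleftrightarrow> (\<forall>u\<in>V. \<forall>w\<in>V. (u, w) \<in> E\<^sup>*)"

end

theory Submission
  imports Defs "HOL-Real_Asymp.Real_Asymp"
begin

lemma is_walk_simps:
  "is_walk V E []"
  "is_walk V E [x] \<longleftrightarrow> x \<in> V"
  "is_walk V E (x # y # xs) \<longleftrightarrow> x \<in> V \<and> (x, y) \<in> E \<and> is_walk V E (y # xs)"
proof -
  show "is_walk V E []" by (simp add: is_walk_def)
  show "is_walk V E [x] \<longleftrightarrow> x \<in> V" by (simp add: is_walk_def)
  show "is_walk V E (x # y # xs) \<longleftrightarrow> x \<in> V \<and> (x, y) \<in> E \<and> is_walk V E (y # xs)"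
  proof
    assume h: "is_walk V E (x # y # xs)"
    have "(x, y) \<in> E" using h unfolding is_walk_def by (metis One_nat_def length_Cons nth_Cons_0 nth_Cons_Suc zero_less_Suc Suc_less_eq)
    moreover have "\<forall>i. Suc i < length (y # xs) \<longrightarrow> ((y # xs) ! i, (y # xs) ! Suc i) \<in> E"
    proof (intro allI impI)
      fix i assume "Suc i < length (y # xs)"
      then have "Suc (Suc i) < length (x # y # xs)" by simp
      then have "((x#y # xs) ! Suc i, (x#y # xs) ! Suc (Suc i)) \<in> E" using h unfolding is_walk_def by blast
      then show "((y # xs) ! i, (y # xs) ! Suc i) \<in> E" by simp
    qed
    ultimately show "x \<in> V \<and> (x, y) \<in> E \<and> is_walk V E (y # xs)" using h unfolding is_walk_def by auto
  next
    assume h: "x \<in> V \<and> (x, y) \<in> E \<and> is_walk V E (y # xs)"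
    show "is_walk V E (x # y # xs)" unfolding is_walk_def
    proof (intro conjI allI impI)
      show "set (x # y # xs) \<subseteq> V" using h unfolding is_walk_def by auto
      fix i assume i: "Suc i < length (x # y # xs)"
      show "((x # y # xs) ! i, (x # y # xs) ! Suc i) \<in> E"
      proof (cases i)
        case 0 then show ?thesis using h by simp
      next
        case (Suc j)
        then have "Suc j < length (y # xs)" using i by simp
        then have "((y # xs) ! j, (y # xs) ! Suc j) \<in> E" using h unfolding is_walk_def by blast
        then show ?thesis using Suc by simp
      qed
    qed
  qed
qed

lemma walk_append:
  assumes "is_walk V E xs" "xs \<noteq> []" "is_walk V E (last xs # ys)"
  shows "is_walk V E (xs @ ys)"
  using assms
proof (induction xs rule: induct_list012)
  case 1 then show ?case by simp
next
  case (2 x) then show ?case by simp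
next
  case (3 x y zs)
  then show ?case by (simp add: is_walk_simps)
qed

lemma walk_hd_cons: "is_walk V E xs \<Longrightarrow> xs \<noteq> [] \<Longrightarrow> hd xs # tl xs = xs" by simp

lemma path_exists:
  assumes "(v, u) \<in> E\<^sup>*" "v \<in> V" "E \<subseteq> V \<times> V"
  shows "\<exists>p. is_walk V E p \<and> p \<noteq> [] \<and> hd p = v \<and> last p = u"
  using assms
proof (induction rule: converse_rtrancl_induct)
  case base
  then show ?case by (intro exI[of _ "[u]"]) (simp add: is_walk_simps)
next
  case (step y z)
  then have "z \<in> V" by auto
  then obtain p where p: "is_walk V E p" "p \<noteq> []" "hd p = z" "last p = u" using step by blast
  then have "p = z # tl p" by (cases p) auto
  then have "is_walk V E (y # p)" using p step by (metis is_walk_simps(3))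
  then show ?case using p by (intro exI[of _ "y # p"]) auto
qed

lemma concat_inj:
  assumes "length s1 = length s2" "concat (map f s1) = concat (map f s2)"
    "\<And>x. length (f x) = L" "f True \<noteq> f False"
  shows "s1 = s2"
  using assms(1,2)
proof (induction s1 arbitrary: s2)
  case Nil then show ?case by simp
next
  case (Cons x s1)
  then obtain y s2' where s2: "s2 = y # s2'" by (cases s2) auto
  have "f x @ concat (map f s1) = f y @ concat (map f s2')" using Cons s2 by simp
  then have "f x = f y" "concat (map f s1) = concat (map f s2')"
    using append_eq_append_conv assms(3) by metis+
  then have "x = y" using assms(4) by (cases x; cases y) auto
  moreover have "s1 = s2'" using Cons \<open>concat (map f s1) = concat (map f s2')\<close> s2 by auto
  ultimately show ?case using s2 by simp
qed


lemma n_G_ge: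
  assumes wm: "weak_model V E ell Phi" and Y: "set Y \<subseteq> Phi"
  shows "card (hypotheses V E ell Y) \<le> n_G V E ell Phi (length Y)"
proof -
  have fP: "finite Phi" using wm unfolding weak_model_def by blast
  have "finite {Z. set Z \<subseteq> Phi \<and> length Z = length Y}"
    by (rule finite_lists_length_eq[OF fP])
  then have fin: "finite (insert 0 ((\<lambda>Z. card (hypotheses V E ell Z)) ` {Z. set Z \<subseteq> Phi \<and> length Z = length Y}))"
    by blast
  have mem: "card (hypotheses V E ell Y) \<in> insert 0 ((\<lambda>Z. card (hypotheses V E ell Z)) ` {Z. set Z \<subseteq> Phi \<and> length Z = length Y})"
    using Y by blast
  show ?thesis unfolding n_G_def by (rule Max_ge[OF fin mem])
qed

lemma hyp_finite:
  assumes wm: "weak_model V E ell Phi"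
  shows "finite (hypotheses V E ell Y)"
proof (rule finite_subset)
  show "hypotheses V E ell Y \<subseteq> {xs. set xs \<subseteq> V \<and> length xs = length Y}"
    unfolding hypotheses_def is_walk_def by blast
  have fV: "finite V" using wm unfolding weak_model_def by blast
  show "finite {xs. set xs \<subseteq> V \<and> length xs = length Y}"
    by (rule finite_lists_length_eq[OF fV])
qed

lemma exp_lower:
  assumes wm: "weak_model V E ell Phi"
    and a: "is_walk V E a" "a \<noteq> []" "hd a = u" "last a = u"
    and b: "is_walk V E b" "b \<noteq> []" "hd b = u" "last b = u"
    and ab: "length a = length b" "map ell a = map ell b" "a \<noteq> b"
  shows "2 ^ m \<le> n_G V E ell Phi (1 + m * (length a - 1))"
proof -
  define f where "f = (\<lambda>x::bool. if x then tl a else tl b)"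
  define W where "W = (\<lambda>s. u # concat (map f s))"
  define Y where "Y = ell u # concat (replicate m (map ell (tl a)))"
  have aa: "a = u # tl a" using a by (cases a) auto
  have bb: "b = u # tl b" using b by (cases b) auto
  have fl: "\<And>x. length (f x) = length a - 1" using ab unfolding f_def by simp
  have fne: "f True \<noteq> f False" using aa bb ab unfolding f_def by auto
  have fc: "\<And>x. map ell (f x) = map ell (tl a)" using ab unfolding f_def by (simp add: map_tl)
  have uV: "u \<in> V" using a aa unfolding is_walk_def by (metis list.set_intros(1) subsetD)
  have lastf: "last (u # f x) = u" for x
  proof (cases x)
    case True then show ?thesis using aa a by (simp add: f_def)
  next
    case False then show ?thesis using bb b by (simp add: f_def)
  qed
  have walkf: "is_walk V E (u # f x)" for x
  proof (cases x)
    case True then show ?thesis using aa a by (simp add: f_def)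
  next
    case False then show ?thesis using bb b by (simp add: f_def)
  qed
  have walkW: "is_walk V E (W s)" for s
  proof (induction s)
    case Nil then show ?case unfolding W_def using uV by (simp add: is_walk_simps)
  next
    case (Cons x s)
    have eq: "W (x # s) = (u # f x) @ concat (map f s)" unfolding W_def by simp
    show ?case unfolding eq
      by (rule walk_append[OF walkf]) (use Cons lastf in \<open>simp_all add: W_def\<close>)
  qed
  have colW: "length s = m \<Longrightarrow> map ell (W s) = Y" for s
  proof -
    assume "length s = m"
    have "map ell (W s) = ell u # concat (map (\<lambda>x. map ell (f x)) s)"
      unfolding W_def by (simp add: map_concat comp_def)
    also have "\<dots> = ell u # concat (map (\<lambda>x. map ell (tl a)) s)" using fc by simp
    also have "\<dots> = Y" unfolding Y_def using \<open>length s = m\<close>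
      by (simp add: map_replicate_const)
    finally show ?thesis .
  qed
  have inj: "inj_on W {s. set s \<subseteq> UNIV \<and> length s = m}"
  proof (rule inj_onI)
    fix s1 s2 assume "s1 \<in> {s. set s \<subseteq> UNIV \<and> length s = m}" "s2 \<in> {s. set s \<subseteq> UNIV \<and> length s = m}" "W s1 = W s2"
    then have "length s1 = length s2" "concat (map f s1) = concat (map f s2)" unfolding W_def by auto
    then show "s1 = s2" by (rule concat_inj[OF _ _ fl fne])
  qed
  have sub: "W ` {s. set s \<subseteq> UNIV \<and> length s = m} \<subseteq> hypotheses V E ell Y"
  proof
    fix w assume "w \<in> W ` {s. set s \<subseteq> UNIV \<and> length s = m}"
    then obtain s where s: "length s = m" "w = W s" by auto
    have "length w = length Y" using colW[OF s(1)] s(2) by (metis length_map)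
    then show "w \<in> hypotheses V E ell Y" unfolding hypotheses_def using walkW colW s by auto
  qed
  have "(2::nat) ^ m = card {s::bool list. set s \<subseteq> UNIV \<and> length s = m}"
    using card_lists_length_eq[of "UNIV::bool set" m] by (simp add: card_UNIV_bool)
  also have "\<dots> = card (W ` {s. set s \<subseteq> UNIV \<and> length s = m})"
    using card_image[OF inj] by simp
  also have "\<dots> \<le> card (hypotheses V E ell Y)"
    using card_mono[OF hyp_finite[OF wm] sub] .
  also have "\<dots> \<le> n_G V E ell Phi (length Y)"
  proof (rule n_G_ge[OF wm])
    have "set a \<subseteq> V" using a unfolding is_walk_def by simp
    then have "ell ` set a \<subseteq> Phi" using wm unfolding weak_model_def by auto
    moreover have "u \<in> set a" "set (tl a) \<subseteq> set a" using aa by (metis list.set_intros(1), metis set_subset_Cons)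
    ultimately show "set Y \<subseteq> Phi" unfolding Y_def by auto
  qed
  also have "length Y = 1 + m * (length a - 1)" unfolding Y_def
    by (simp add: length_concat sum_list_replicate)
  finally show ?thesis .
qed


lemma no_eda:
  assumes wm: "weak_model V E ell Phi" and tr: "trackable V E ell Phi"
    and a: "is_walk V E a" "a \<noteq> []" "hd a = u" "last a = u"
    and b: "is_walk V E b" "b \<noteq> []" "hd b = u" "last b = u"
    and ab: "length a = length b" "map ell a = map ell b" "a \<noteq> b"
  shows False
proof -
  define L where "L = length a - 1"
  have aa: "a = u # tl a" using a by (cases a) auto
  have bb: "b = u # tl b" using b by (cases b) auto
  have "L \<ge> 1"
  proof (rule ccontr)
    assume "\<not> L \<ge> 1"
    then have "length (tl a) = 0" "length (tl b) = 0" using ab unfolding L_def by auto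
    then have "tl a = []" "tl b = []" by (simp_all only: length_0_conv)
    then show False using aa bb ab by simp
  qed
  have low: "\<And>m. 2 ^ m \<le> n_G V E ell Phi (1 + m * L)"
    unfolding L_def by (rule exp_lower[OF wm a b ab])
  obtain k where "(\<lambda>t. real (n_G V E ell Phi t)) \<in> O(\<lambda>t. real t ^ k)"
    using tr unfolding trackable_def by blast
  then obtain c where c: "c > 0" "eventually (\<lambda>t. norm (real (n_G V E ell Phi t)) \<le> c * norm (real t ^ k)) at_top"
    by (elim landau_o.bigE)
  then obtain N where N: "\<And>t. t \<ge> N \<Longrightarrow> real (n_G V E ell Phi t) \<le> c * real t ^ k"
    unfolding eventually_at_top_linorder by auto
  have "real L > 0" using \<open>L \<ge> 1\<close> by simp
  then have "eventually (\<lambda>m::nat. c * (1 + real m * real L)^k < 2^m) at_top"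
    using c(1) by real_asymp
  then obtain M where M: "\<And>m. m \<ge> M \<Longrightarrow> c * (1 + real m * real L)^k < 2^m"
    unfolding eventually_at_top_linorder by auto
  define m where "m = max M N"
  have "1 + m * L \<ge> N" using \<open>L \<ge> 1\<close> unfolding m_def
    by (metis le_add2 le_trans max.cobounded2 mult_le_mono2 nat_mult_1_right add.commute)
  then have "real (n_G V E ell Phi (1 + m * L)) \<le> c * real (1 + m * L) ^ k" by (rule N)
  also have "\<dots> = c * (1 + real m * real L) ^ k" by simp
  also have "\<dots> < 2 ^ m" using M[of m] unfolding m_def by simp
  finally have "real (n_G V E ell Phi (1 + m * L)) < 2 ^ m" .
  moreover have "(2::real) ^ m \<le> real (n_G V E ell Phi (1 + m * L))"
    using low[of m] by (metis of_nat_le_iff of_nat_numeral of_nat_power)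
  ultimately show False by simp
qed

theorem theorem1:
  fixes V :: "'v set" and E :: "('v \<times> 'v) set" and ell :: "'v \<Rightarrow> 'c" and Phi :: "'c set"
  assumes "weak_model V E ell Phi"
    and "strongly_connected V E"
    and "trackable V E ell Phi"
  shows "\<exists>C::nat. \<forall>t\<ge>1. n_G V E ell Phi t \<le> C"
proof (intro exI allI impI)
  fix t :: nat assume t: "t \<ge> 1"
  note wm = assms(1)
  have fV: "finite V" and EV: "E \<subseteq> V \<times> V" and fP: "finite Phi"
    using wm unfolding weak_model_def by auto
  have bound: "card (hypotheses V E ell Y) \<le> card V * card V" if Y: "length Y = t" for Y
  proof -
    have inj: "inj_on (\<lambda>xs. (hd xs, last xs)) (hypotheses V E ell Y)"
    proof (rule inj_onI, rule ccontr)
      fix xs1 xs2 assume h1: "xs1 \<in> hypotheses V E ell Y" and h2: "xs2 \<in> hypotheses V E ell Y"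
        and eq: "(hd xs1, last xs1) = (hd xs2, last xs2)" and ne: "xs1 \<noteq> xs2"
      have w1: "is_walk V E xs1" "length xs1 = t" "map ell xs1 = Y" using h1 Y unfolding hypotheses_def by auto
      have w2: "is_walk V E xs2" "length xs2 = t" "map ell xs2 = Y" using h2 Y unfolding hypotheses_def by auto
      have n1: "xs1 \<noteq> []" and n2: "xs2 \<noteq> []" using w1(2) w2(2) t by auto
      define u where "u = hd xs1"
      define v where "v = last xs1"
      have vV: "v \<in> V" using w1(1) n1 unfolding v_def is_walk_def by auto
      have uV: "u \<in> V" using w1(1) n1 unfolding u_def is_walk_def by auto
      have "(v, u) \<in> E\<^sup>*" using assms(2) vV uV unfolding strongly_connected_def by blast
      then obtain p where p: "is_walk V E p" "p \<noteq> []" "hd p = v" "last p = u"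
        using path_exists[OF _ vV EV] by blast
      have pp: "p = v # tl p" using p by (cases p) auto
      have hu2: "hd xs2 = u" "last xs2 = v" using eq unfolding u_def v_def by auto
      have wa: "is_walk V E (xs1 @ tl p)"
        by (rule walk_append[OF w1(1) n1]) (metis pp p(1) v_def)
      have wb: "is_walk V E (xs2 @ tl p)"
        by (rule walk_append[OF w2(1) n2]) (metis pp p(1) hu2(2))
      have lastu: "last (xs @ tl p) = u" if "xs \<noteq> []" "last xs = v" for xs
      proof (cases "tl p = []")
        case True
        then have "p = [v]" using pp by simp
        then have "u = v" using p(4) by simp
        then show ?thesis using that True by simp
      next
        case False
        then have "last (tl p) = last p" using pp by (metis last_ConsR)
        then show ?thesis using False p(4) by simp
      qed
      show False
      proof (rule no_eda[OF wm assms(3) wa _ _ _ wb])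
        show "xs1 @ tl p \<noteq> []" "xs2 @ tl p \<noteq> []" using n1 n2 by auto
        show "hd (xs1 @ tl p) = u" using n1 unfolding u_def by simp
        show "hd (xs2 @ tl p) = u" using n2 hu2 by simp
        show "last (xs1 @ tl p) = u" using lastu n1 v_def by simp
        show "last (xs2 @ tl p) = u" using lastu n2 hu2 by simp
        show "length (xs1 @ tl p) = length (xs2 @ tl p)" using w1 w2 by simp
        show "map ell (xs1 @ tl p) = map ell (xs2 @ tl p)" using w1 w2 by simp
        show "xs1 @ tl p \<noteq> xs2 @ tl p" using ne by simp
      qed
    qed
    have sub: "(\<lambda>xs. (hd xs, last xs)) ` hypotheses V E ell Y \<subseteq> V \<times> V"
    proof
      fix z assume "z \<in> (\<lambda>xs. (hd xs, last xs)) ` hypotheses V E ell Y"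
      then obtain xs where xs: "xs \<in> hypotheses V E ell Y" "z = (hd xs, last xs)" by blast
      then have "set xs \<subseteq> V" "length xs = t" using Y unfolding hypotheses_def is_walk_def by auto
      then have "xs \<noteq> []" using t by auto
      then show "z \<in> V \<times> V" using xs(2) \<open>set xs \<subseteq> V\<close> by auto
    qed
    have "card (hypotheses V E ell Y) \<le> card (V \<times> V)"
      by (rule card_inj_on_le[OF inj sub]) (simp add: fV)
    then show ?thesis by (simp add: card_cartesian_product)
  qed
  have fin: "finite {Y. set Y \<subseteq> Phi \<and> length Y = t}" by (rule finite_lists_length_eq[OF fP])
  show "n_G V E ell Phi t \<le> card V * card V"
    unfolding n_G_def
    by (rule Max.boundedI) (use fin bound in auto)
qed

end
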